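(* Let $\mathcal{G}=(V,E)$ be an unweighted simple directed graph and let $\phi_1,\dots,\phi_l$ be spanning converging forests sampled independently and uniformly at random from the set $\mathcal{F}$ of all spanning converging forests of $\mathcal{G}$. For nodes $i,j$ define the estimator $$\overline{\omega}_{ij}=\begin{cases}\dfrac{1}{l}\displaystyle\sum_{t=1}^{l}\frac{1}{2+d_j}\Big(\widehat{\omega}_{ij}(\phi_t)+\sum_{k\in N^-_j}\widehat{\omega}_{ik}(\phi_t)\Big), & i\neq j,\\[3mm] \dfrac{1}{l}\displaystyle\sum_{t=1}^{l}\frac{1}{1+d_i}\Big(1+\sum_{k\in N^-_i}\widehat{\omega}_{ik}(\phi_t)\Big), & i=j.\end{cases}$$ (1) For any pair of nodes $i\neq j$ and parameters $\epsilon,\delta\in(0,1)$, if $l=\left\lceil \frac{1}{(2+d_j)^2}\left(\frac{1}{2\epsilon^2}+\frac{2}{3\epsilon}\right)\log\frac{2}{\delta}\right\rceil$, then with probability at least $1-\delta$, $$\omega_{ij}-\epsilon\le\overline{\omega}_{ij}\le\omega_{ij}+\epsilon.$$ (2) For $i=j$ and parameters $\epsilon,\delta\in(0,1)$, if $l=\left\lceil\left(\frac{2}{3\epsilon}+\frac{1}{4\epsilon^2}\right)\log\frac{2}{\delta}\right\rceil$, then with probability at least $1-\delta$, $$(1-\epsilon)\,\omega_{ii}\le\overline{\omega}_{ii}\le(1+\epsilon)\,\omega_{ii}.$$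
   Context: $\mathcal{G}=(V,E)$ has $n$ nodes; $a_{ij}=1$ if $(i,j)\in E$ and $0$ otherwise. $d_i=\sum_j a_{ij}$ is the out-degree of $i$, $\mathbf{D}=\mathrm{diag}(d_1,\dots,d_n)$, $\mathbf{L}=\mathbf{D}-\mathbf{A}$, and the forest matrix is $\mathbf{\Omega}=(\mathbf{I}+\mathbf{L})^{-1}=(\omega_{ij})$. $N^-_j=\{k:(k,j)\in E\}$ is the set of in-neighbors of $j$. A rooted converging tree is a weakly connected digraph without cycles in which one node (the root) has out-degree $0$ and every other node has out-degree $1$ (an isolated node is such a tree rooted at itself). A spanning converging forest of $\mathcal{G}$ is a spanning subgraph (all of $V$, a subset of $E$) whose weakly connected components are rooted converging trees; $r_\phi(i)$ is the root of the tree of $\phi$ containing $i$. $\widehat{\omega}_{ij}(\phi)=\mathbb{I}_{\{r_\phi(i)=j\}}$ equals 1 if $r_\phi(i)=j$ and 0 otherwise. (The estimator $\overline{\omega}_{ij}$ is the output of the paper's algorithm SFQPlus on the sampled forests.) *)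

theory Defs
  imports "HOL-Probability.Probability"
begin

definition outdeg :: "('n \<times> 'n) set \<Rightarrow> 'n \<Rightarrow> nat" where
  "outdeg E i = card {j. (i, j) \<in> E}"

definition in_nbrs :: "('n \<times> 'n) set \<Rightarrow> 'n \<Rightarrow> 'n set" where
  "in_nbrs E j = {k. (k, j) \<in> E}"

definition laplacian :: "('n::finite \<times> 'n) set \<Rightarrow> real^'n^'n" where
  "laplacian E = (\<chi> i j. (if i = j then real (outdeg E i) else 0) - (if (i, j) \<in> E then 1 else 0))"

definition forest_matrix :: "('n::finite \<times> 'n) set \<Rightarrow> real^'n^'n" where
  "forest_matrix E = matrix_inv (mat 1 + laplacian E)"

definition weak_comp :: "('n \<times> 'n) set \<Rightarrow> 'n \<Rightarrow> 'n set" where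
  "weak_comp F i = {v. (i, v) \<in> (F \<union> F\<inverse>)\<^sup>*}"

definition rooted_conv_tree :: "'n set \<Rightarrow> ('n \<times> 'n) set \<Rightarrow> bool" where
  "rooted_conv_tree C T \<longleftrightarrow>
     T \<subseteq> C \<times> C \<and> C \<noteq> {} \<and>
     (\<forall>u\<in>C. \<forall>v\<in>C. (u, v) \<in> (T \<union> T\<inverse>)\<^sup>*) \<and>
     acyclic T \<and>
     (\<exists>r\<in>C. (\<forall>v. (r, v) \<notin> T) \<and> (\<forall>u\<in>C - {r}. \<exists>!v. (u, v) \<in> T))"

definition spanning_conv_forest :: "('n \<times> 'n) set \<Rightarrow> ('n \<times> 'n) set \<Rightarrow> bool" where
  "spanning_conv_forest E F \<longleftrightarrow> F \<subseteq> E \<and>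
     (\<forall>i. rooted_conv_tree (weak_comp F i) (F \<inter> (weak_comp F i \<times> weak_comp F i)))"

definition conv_forests :: "('n \<times> 'n) set \<Rightarrow> ('n \<times> 'n) set set" where
  "conv_forests E = {F. spanning_conv_forest E F}"

definition root_of :: "('n \<times> 'n) set \<Rightarrow> 'n \<Rightarrow> 'n" where
  "root_of F i = (THE r. r \<in> weak_comp F i \<and> (\<forall>v. (r, v) \<notin> F))"

definition omega_hat :: "('n \<times> 'n) set \<Rightarrow> 'n \<Rightarrow> 'n \<Rightarrow> real" where
  "omega_hat F i j = (if root_of F i = j then 1 else 0)"

definition omega_bar :: "('n \<times> 'n) set \<Rightarrow> nat \<Rightarrow> (nat \<Rightarrow> ('n \<times> 'n) set) \<Rightarrow> 'n \<Rightarrow> 'n \<Rightarrow> real" where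
  "omega_bar E l phis i j =
     (if i \<noteq> j then
        (1 / real l) * (\<Sum>t<l. (1 / (2 + real (outdeg E j))) *
            (omega_hat (phis t) i j + (\<Sum>k\<in>in_nbrs E j. omega_hat (phis t) i k)))
      else
        (1 / real l) * (\<Sum>t<l. (1 / (1 + real (outdeg E i))) *
            (1 + (\<Sum>k\<in>in_nbrs E i. omega_hat (phis t) i k))))"

definition forest_samples :: "('n \<times> 'n) set \<Rightarrow> nat \<Rightarrow> (nat \<Rightarrow> ('n \<times> 'n) set) pmf" where
  "forest_samples E l = Pi_pmf {..<l} {} (\<lambda>_. pmf_of_set (conv_forests E))"

end

theory Submission
  imports Defs
begin

definition sinkF :: "('n \<times> 'n) set \<Rightarrow> 'n \<Rightarrow> bool" where
  "sinkF F r \<longleftrightarrow> (\<forall>v. (r, v) \<notin> F)"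
definition funcF :: "('n \<times> 'n) set \<Rightarrow> bool" where
  "funcF F \<longleftrightarrow> (\<forall>u v w. (u, v) \<in> F \<longrightarrow> (u, w) \<in> F \<longrightarrow> v = w)"
definition goodF :: "('n \<times> 'n) set \<Rightarrow> ('n \<times> 'n) set \<Rightarrow> bool" where
  "goodF E F \<longleftrightarrow> F \<subseteq> E \<and> funcF F \<and> acyclic F"
definition rt :: "('n \<times> 'n) set \<Rightarrow> 'n \<Rightarrow> 'n" where
  "rt F k = (THE r. (k, r) \<in> F\<^sup>* \<and> sinkF F r)"

lemma func_chain:
  assumes "funcF F" "(k, a) \<in> F\<^sup>*" "(k, b) \<in> F\<^sup>*"
  shows "(a, b) \<in> F\<^sup>* \<or> (b, a) \<in> F\<^sup>*"
  using assms(2)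
proof (induction rule: rtrancl_induct)
  case base then show ?case using assms(3) by blast
next
  case (step a a')
  from step.IH show ?case
  proof
    assume "(a, b) \<in> F\<^sup>*"
    then show ?thesis
    proof (cases rule: converse_rtranclE)
      case base then show ?thesis using step.hyps(2) by blast
    next
      case (step c)
      then have "c = a'" using assms(1) \<open>(a, a') \<in> F\<close> unfolding funcF_def by blast
      then show ?thesis using step by blast
    qed
  next
    assume "(b, a) \<in> F\<^sup>*"
    then show ?thesis using step.hyps(2) by (meson rtrancl.rtrancl_into_rtrancl)
  qed
qed

lemma sink_rtrancl: "sinkF F a \<Longrightarrow> (a, b) \<in> F\<^sup>* \<Longrightarrow> a = b"
  unfolding sinkF_def by (erule converse_rtranclE) auto

lemma sink_unique:
  assumes "funcF F" "(k, a) \<in> F\<^sup>*" "(k, b) \<in> F\<^sup>*" "sinkF F a" "sinkF F b"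
  shows "a = b"
  using func_chain[OF assms(1-3)] sink_rtrancl assms(4,5) by metis

lemma sink_exists:
  fixes F :: "('n::finite \<times> 'n) set"
  assumes "acyclic F"
  shows "\<exists>r. (k, r) \<in> F\<^sup>* \<and> sinkF F r"
proof -
  have wf: "wf (F\<inverse>)" by (rule finite_acyclic_wf_converse) (auto simp: assms)
  show ?thesis
  proof (induction k rule: wf_induct_rule[OF wf])
    case (1 x)
    show ?case
    proof (cases "sinkF F x")
      case True then show ?thesis by blast
    next
      case False
      then obtain y where "(x, y) \<in> F" unfolding sinkF_def by blast
      with 1 obtain r where "(y, r) \<in> F\<^sup>*" "sinkF F r" by blast
      then show ?thesis using \<open>(x, y) \<in> F\<close> by (meson converse_rtrancl_into_rtrancl)
    qed
  qed
qed

lemma rt_prop: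
  fixes F :: "('n::finite \<times> 'n) set"
  assumes "funcF F" "acyclic F"
  shows "(k, rt F k) \<in> F\<^sup>* \<and> sinkF F (rt F k)"
proof -
  obtain r where r: "(k, r) \<in> F\<^sup>*" "sinkF F r" using sink_exists[OF assms(2)] by blast
  have "rt F k = r" unfolding rt_def
    by (rule the_equality) (use r sink_unique[OF assms(1)] in blast)+
  then show ?thesis using r by simp
qed

lemma rt_eq:
  fixes F :: "('n::finite \<times> 'n) set"
  assumes "funcF F" "acyclic F" "(k, r) \<in> F\<^sup>*" "sinkF F r"
  shows "rt F k = r"
  using rt_prop[OF assms(1,2), of k] sink_unique[OF assms(1)] assms(3,4) by blast

lemma rt_step:
  fixes F :: "('n::finite \<times> 'n) set"
  assumes "funcF F" "acyclic F" "(u, v) \<in> F"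
  shows "rt F u = rt F v"
proof -
  have "(v, rt F v) \<in> F\<^sup>*" "sinkF F (rt F v)" using rt_prop[OF assms(1,2)] by auto
  then show ?thesis using rt_eq[OF assms(1,2)] assms(3) by (meson converse_rtrancl_into_rtrancl)
qed

lemma rt_weak:
  fixes F :: "('n::finite \<times> 'n) set"
  assumes "funcF F" "acyclic F" "(u, v) \<in> (F \<union> F\<inverse>)\<^sup>*"
  shows "rt F u = rt F v"
  using assms(3)
proof (induction rule: rtrancl_induct)
  case (step y z)
  then show ?case using rt_step[OF assms(1,2), of y z] rt_step[OF assms(1,2), of z y] by auto
qed simp

lemma weak_sym: "(u, v) \<in> (F \<union> F\<inverse>)\<^sup>* \<Longrightarrow> (v, u) \<in> (F \<union> F\<inverse>)\<^sup>*"
proof -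
  assume "(u, v) \<in> (F \<union> F\<inverse>)\<^sup>*"
  then have "(v, u) \<in> ((F \<union> F\<inverse>)\<inverse>)\<^sup>*" by (simp add: rtrancl_converse)
  moreover have "(F \<union> F\<inverse>)\<inverse> = F \<union> F\<inverse>" by auto
  ultimately show ?thesis by simp
qed

lemma rtrancl_weak: "(u, v) \<in> F\<^sup>* \<Longrightarrow> (u, v) \<in> (F \<union> F\<inverse>)\<^sup>*"
  by (metis in_rtrancl_UnI)

lemma weak_restrict:
  assumes "x \<in> weak_comp F i" "(x, y) \<in> (F \<union> F\<inverse>)\<^sup>*"
  shows "(x, y) \<in> ((F \<inter> (weak_comp F i \<times> weak_comp F i)) \<union> (F \<inter> (weak_comp F i \<times> weak_comp F i))\<inverse>)\<^sup>*"
  using assms(2)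
proof (induction rule: rtrancl_induct)
  case base then show ?case by simp
next
  case (step y z)
  have "(i, y) \<in> (F \<union> F\<inverse>)\<^sup>*" using assms(1) step.hyps(1) unfolding weak_comp_def
    by (meson rtrancl_trans mem_Collect_eq)
  moreover have "(i, z) \<in> (F \<union> F\<inverse>)\<^sup>*" using calculation step.hyps(2) by (meson rtrancl.rtrancl_into_rtrancl)
  ultimately have "y \<in> weak_comp F i" "z \<in> weak_comp F i" unfolding weak_comp_def by auto
  then have "(y, z) \<in> (F \<inter> (weak_comp F i \<times> weak_comp F i)) \<union> (F \<inter> (weak_comp F i \<times> weak_comp F i))\<inverse>"
    using step.hyps(2) by auto
  then show ?case using step.IH by (meson rtrancl.rtrancl_into_rtrancl)
qed

lemma good_imp_scf:
  fixes F :: "('n::finite \<times> 'n) set"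
  assumes "goodF E F"
  shows "spanning_conv_forest E F"
  unfolding spanning_conv_forest_def
proof (intro conjI allI)
  show "F \<subseteq> E" using assms unfolding goodF_def by blast
  have fa: "funcF F" "acyclic F" using assms unfolding goodF_def by auto
  fix i
  define C where "C = weak_comp F i"
  define T where "T = F \<inter> (C \<times> C)"
  have iC: "i \<in> C" unfolding C_def weak_comp_def by simp
  have conn: "\<forall>u\<in>C. \<forall>v\<in>C. (u, v) \<in> (T \<union> T\<inverse>)\<^sup>*"
  proof (intro ballI)
    fix u v assume "u \<in> C" "v \<in> C"
    then have "(i, u) \<in> (F \<union> F\<inverse>)\<^sup>*" "(i, v) \<in> (F \<union> F\<inverse>)\<^sup>*" unfolding C_def weak_comp_def by auto
    then have "(u, v) \<in> (F \<union> F\<inverse>)\<^sup>*" using weak_sym[of i u F] rtrancl_trans by fast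
    then show "(u, v) \<in> (T \<union> T\<inverse>)\<^sup>*" using weak_restrict[of u F i v] \<open>u \<in> C\<close> unfolding T_def C_def by simp
  qed
  have rtC: "rt F u = rt F i" if "u \<in> C" for u
  proof -
    have "(i, u) \<in> (F \<union> F\<inverse>)\<^sup>*" using that unfolding C_def weak_comp_def by simp
    then show ?thesis using rt_weak[OF fa, of u i] weak_sym[of i u F] by simp
  qed
  define r where "r = rt F i"
  have rC: "r \<in> C" using rt_prop[OF fa, of i] rtrancl_weak[of i "rt F i" F] unfolding r_def C_def weak_comp_def by simp
  have rs: "sinkF F r" using rt_prop[OF fa, of i] unfolding r_def by blast
  have root: "(\<forall>v. (r, v) \<notin> T) \<and> (\<forall>u\<in>C - {r}. \<exists>!v. (u, v) \<in> T)"
  proof (intro conjI allI ballI)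
    show "(r, v) \<notin> T" for v using rs unfolding T_def sinkF_def by blast
    fix u assume u: "u \<in> C - {r}"
    have "\<not> sinkF F u"
    proof
      assume "sinkF F u"
      then have "rt F u = u" by (rule rt_eq[OF fa rtrancl.rtrancl_refl])
      then show False using rtC[of u] u unfolding r_def by auto
    qed
    then obtain v where v: "(u, v) \<in> F" unfolding sinkF_def by blast
    have "(i, u) \<in> (F \<union> F\<inverse>)\<^sup>*" using u unfolding C_def weak_comp_def by blast
    then have "(i, v) \<in> (F \<union> F\<inverse>)\<^sup>*" using v by (meson UnI1 rtrancl.rtrancl_into_rtrancl)
    then have "v \<in> C" unfolding C_def weak_comp_def by blast
    then have "(u, v) \<in> T" using u v unfolding T_def by auto
    moreover have "w = v" if "(u, w) \<in> T" for w using that v fa(1) unfolding funcF_def T_def by blast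
    ultimately show "\<exists>!v. (u, v) \<in> T" by blast
  qed
  show "rooted_conv_tree (weak_comp F i) (F \<inter> (weak_comp F i \<times> weak_comp F i))"
    unfolding rooted_conv_tree_def C_def[symmetric] T_def[symmetric]
  proof (intro conjI)
    show "T \<subseteq> C \<times> C" unfolding T_def by blast
    show "C \<noteq> {}" using iC by blast
    show "acyclic T" unfolding T_def by (rule acyclic_subset[OF fa(2)]) blast
    show "\<exists>r\<in>C. (\<forall>v. (r, v) \<notin> T) \<and> (\<forall>u\<in>C - {r}. \<exists>!v. (u, v) \<in> T)"
      using root rC by blast
  qed (rule conn)
qed

lemma wc_self: "u \<in> weak_comp F u" unfolding weak_comp_def by simp

lemma wc_trans: "(x, y) \<in> (F \<union> F\<inverse>)\<^sup>* \<Longrightarrow> y \<in> weak_comp F x"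
  unfolding weak_comp_def by simp

lemma trancl_restrict:
  assumes "(x, y) \<in> F\<^sup>+"
  shows "(x, y) \<in> (F \<inter> (weak_comp F x \<times> weak_comp F x))\<^sup>+"
  using assms
proof (induction rule: trancl_induct)
  case (base y)
  then have "(x, y) \<in> F \<union> F\<inverse>" by (rule UnI1)
  then have "(x, y) \<in> (F \<union> F\<inverse>)\<^sup>*" by (rule r_into_rtrancl)
  then have "y \<in> weak_comp F x" by (rule wc_trans)
  then have "(x, y) \<in> F \<inter> (weak_comp F x \<times> weak_comp F x)" using base wc_self[of x F] by blast
  then show ?case by (rule r_into_trancl)
next
  case (step y z)
  have "(x, y) \<in> F\<^sup>*" using step.hyps(1) by (rule trancl_into_rtrancl)
  then have xy: "(x, y) \<in> (F \<union> F\<inverse>)\<^sup>*" by (rule rtrancl_weak)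
  moreover have "(y, z) \<in> F \<union> F\<inverse>" using step.hyps(2) by (rule UnI1)
  ultimately have "(x, z) \<in> (F \<union> F\<inverse>)\<^sup>*" by (rule rtrancl.rtrancl_into_rtrancl)
  then have "z \<in> weak_comp F x" by (rule wc_trans)
  moreover have "y \<in> weak_comp F x" using xy by (rule wc_trans)
  ultimately have "(y, z) \<in> F \<inter> (weak_comp F x \<times> weak_comp F x)" using step.hyps(2) by blast
  then show ?case by (rule trancl_into_trancl[OF step.IH])
qed

lemma scf_imp_good:
  assumes "spanning_conv_forest E F"
  shows "goodF E F"
  unfolding goodF_def
proof (intro conjI)
  show "F \<subseteq> E" using assms unfolding spanning_conv_forest_def by blast
  have tree: "rooted_conv_tree (weak_comp F i) (F \<inter> (weak_comp F i \<times> weak_comp F i))" for i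
    using assms unfolding spanning_conv_forest_def by blast
  show "funcF F" unfolding funcF_def
  proof (intro allI impI)
    fix u v w assume uv: "(u, v) \<in> F" and uw: "(u, w) \<in> F"
    define C where "C = weak_comp F u"
    define T where "T = F \<inter> (C \<times> C)"
    have "rooted_conv_tree C T" using tree[of u] unfolding C_def T_def .
    then obtain r where r: "r \<in> C" "\<forall>v. (r, v) \<notin> T" "\<forall>x\<in>C - {r}. \<exists>!y. (x, y) \<in> T"
      unfolding rooted_conv_tree_def by blast
    have "v \<in> C" using uv wc_trans[of u v F] unfolding C_def by (meson UnI1 r_into_rtrancl)
    moreover have "w \<in> C" using uw wc_trans[of u w F] unfolding C_def by (meson UnI1 r_into_rtrancl)
    moreover have "u \<in> C" unfolding C_def by (rule wc_self)
    ultimately have T: "(u, v) \<in> T" "(u, w) \<in> T" using uv uw unfolding T_def by auto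
    then have "u \<noteq> r" using r(2) by blast
    then have "u \<in> C - {r}" using \<open>u \<in> C\<close> by simp
    then have "\<exists>!y. (u, y) \<in> T" using r(3) by simp
    then obtain y0 where "\<forall>y. (u, y) \<in> T \<longrightarrow> y = y0" by blast
    then show "v = w" using T by metis
  qed
  show "acyclic F" unfolding acyclic_def
  proof
    fix x
    show "(x, x) \<notin> F\<^sup>+"
    proof
      assume "(x, x) \<in> F\<^sup>+"
      then have "(x, x) \<in> (F \<inter> (weak_comp F x \<times> weak_comp F x))\<^sup>+" by (rule trancl_restrict)
      moreover have "acyclic (F \<inter> (weak_comp F x \<times> weak_comp F x))"
        using tree[of x] unfolding rooted_conv_tree_def by blast
      ultimately show False unfolding acyclic_def by blast
    qed
  qed
qed

lemma conv_forests_eq: "conv_forests (E :: ('n::finite \<times> 'n) set) = {F. goodF E F}"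
  unfolding conv_forests_def using scf_imp_good good_imp_scf by blast

lemma root_of_rt:
  fixes F :: "('n::finite \<times> 'n) set"
  assumes "goodF E F"
  shows "root_of F k = rt F k"
proof -
  have fa: "funcF F" "acyclic F" using assms unfolding goodF_def by auto
  have p: "(k, rt F k) \<in> F\<^sup>*" "sinkF F (rt F k)" using rt_prop[OF fa] by auto
  show ?thesis unfolding root_of_def
  proof (rule the_equality)
    show "rt F k \<in> weak_comp F k \<and> (\<forall>v. (rt F k, v) \<notin> F)"
      using wc_trans[OF rtrancl_weak[OF p(1)]] p(2) unfolding sinkF_def by simp
    fix r assume r: "r \<in> weak_comp F k \<and> (\<forall>v. (r, v) \<notin> F)"
    then have "sinkF F r" unfolding sinkF_def by simp
    then have "rt F r = r" by (rule rt_eq[OF fa rtrancl.rtrancl_refl])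
    moreover have "(k, r) \<in> (F \<union> F\<inverse>)\<^sup>*" using r unfolding weak_comp_def by simp
    then have "rt F k = rt F r" by (rule rt_weak[OF fa])
    ultimately show "r = rt F k" by simp
  qed
qed

definition cutF :: "'n \<Rightarrow> ('n \<times> 'n) set \<Rightarrow> ('n \<times> 'n) set" where
  "cutF i F = {e \<in> F. fst e \<noteq> i}"

definition ind :: "bool \<Rightarrow> real" where "ind b = (if b then 1 else 0)"

lemma good_subset: "goodF E F \<Longrightarrow> G \<subseteq> F \<Longrightarrow> goodF E G"
proof -
  assume g: "goodF E F" and s: "G \<subseteq> F"
  have "G \<subseteq> E" using g s unfolding goodF_def by blast
  moreover have "funcF G" using g s unfolding goodF_def funcF_def by blast
  moreover have "acyclic G" using g s acyclic_subset unfolding goodF_def by blast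
  ultimately show ?thesis unfolding goodF_def by blast
qed

lemma cut_good: "goodF E F \<Longrightarrow> goodF E (cutF i F)"
  by (rule good_subset) (auto simp: cutF_def)

lemma cut_sink: "sinkF (cutF i F) i"
  unfolding sinkF_def cutF_def by auto

lemma cut_id: "sinkF F i \<Longrightarrow> cutF i F = F"
  unfolding sinkF_def cutF_def by auto

lemma rt_sink_self:
  fixes G :: "('n::finite \<times> 'n) set"
  assumes "goodF E G" "sinkF G i"
  shows "rt G i = i"
proof -
  have fa: "funcF G" "acyclic G" using assms(1) unfolding goodF_def by auto
  show ?thesis by (rule rt_eq[OF fa rtrancl.rtrancl_refl assms(2)])
qed

lemma insert_good:
  fixes G :: "('n::finite \<times> 'n) set"
  assumes g: "goodF E G" and s: "sinkF G i" and x: "(i, x) \<in> E" and r: "rt G x \<noteq> i"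
  shows "goodF E (insert (i, x) G)"
proof -
  have fa: "funcF G" "acyclic G" using g unfolding goodF_def by auto
  have "(x, i) \<notin> G\<^sup>*"
  proof
    assume "(x, i) \<in> G\<^sup>*"
    then have "rt G x = i" by (rule rt_eq[OF fa _ s])
    then show False using r by simp
  qed
  then have "acyclic (insert (i, x) G)" using fa(2) by simp
  moreover have "funcF (insert (i, x) G)" using fa(1) s unfolding funcF_def sinkF_def by blast
  moreover have "insert (i, x) G \<subseteq> E" using g x unfolding goodF_def by blast
  ultimately show ?thesis unfolding goodF_def by blast
qed

lemma insert_rt:
  fixes G :: "('n::finite \<times> 'n) set"
  assumes g: "goodF E G" and s: "sinkF G i" and x: "(i, x) \<in> E" and r: "rt G x \<noteq> i"
  shows "rt (insert (i, x) G) k = (if rt G k = i then rt G x else rt G k)"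
proof -
  define G' where "G' = insert (i, x) G"
  have fa: "funcF G" "acyclic G" using g unfolding goodF_def by auto
  have fa': "funcF G'" "acyclic G'" using insert_good[OF assms] unfolding goodF_def G'_def by auto
  have sub: "G\<^sup>* \<subseteq> G'\<^sup>*" unfolding G'_def by (rule rtrancl_mono) blast
  have sk: "sinkF G' v" if "sinkF G v" "v \<noteq> i" for v
    using that unfolding sinkF_def G'_def by auto
  have pk: "(k, rt G k) \<in> G\<^sup>*" "sinkF G (rt G k)" using rt_prop[OF fa] by auto
  have px: "(x, rt G x) \<in> G\<^sup>*" "sinkF G (rt G x)" using rt_prop[OF fa] by auto
  show ?thesis
  proof (cases "rt G k = i")
    case True
    have ki: "(k, i) \<in> G'\<^sup>*" using pk(1) True sub by auto
    have ix: "(i, x) \<in> G'" unfolding G'_def by simp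
    have xr: "(x, rt G x) \<in> G'\<^sup>*" using px(1) sub by auto
    have "(k, x) \<in> G'\<^sup>*" using ki ix by (rule rtrancl_into_rtrancl)
    then have "(k, rt G x) \<in> G'\<^sup>*" using xr by (rule rtrancl_trans)
    then have "rt G' k = rt G x" by (rule rt_eq[OF fa' _ sk[OF px(2) r]])
    then show ?thesis using True unfolding G'_def by simp
  next
    case False
    have "(k, rt G k) \<in> G'\<^sup>*" using pk(1) sub by auto
    then have "rt G' k = rt G k" by (rule rt_eq[OF fa' _ sk[OF pk(2) False]])
    then show ?thesis using False unfolding G'_def by simp
  qed
qed

lemma nonsink_decomp:
  fixes F :: "('n::finite \<times> 'n) set"
  assumes g: "goodF E F" and ns: "\<not> sinkF F i"
  shows "\<exists>x. F = insert (i, x) (cutF i F) \<and> (i, x) \<in> E \<and> rt (cutF i F) x \<noteq> i"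
proof -
  have fa: "funcF F" "acyclic F" using g unfolding goodF_def by auto
  obtain x where ix: "(i, x) \<in> F" using ns unfolding sinkF_def by blast
  have eq: "F = insert (i, x) (cutF i F)"
  proof
    show "F \<subseteq> insert (i, x) (cutF i F)"
    proof
      fix e assume "e \<in> F"
      show "e \<in> insert (i, x) (cutF i F)"
      proof (cases "fst e = i")
        case True
        then have "e = (i, snd e)" by (cases e) simp
        then have "(i, snd e) \<in> F" using \<open>e \<in> F\<close> by simp
        then have "snd e = x" using fa(1) ix unfolding funcF_def by blast
        then show ?thesis using \<open>e = (i, snd e)\<close> by simp
      next
        case False then show ?thesis using \<open>e \<in> F\<close> unfolding cutF_def by simp
      qed
    qed
    show "insert (i, x) (cutF i F) \<subseteq> F" using ix unfolding cutF_def by auto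
  qed
  have "(i, x) \<in> E" using g ix unfolding goodF_def by blast
  moreover have "rt (cutF i F) x \<noteq> i"
  proof
    assume a: "rt (cutF i F) x = i"
    have fc: "funcF (cutF i F)" "acyclic (cutF i F)" using cut_good[OF g] unfolding goodF_def by auto
    have "(x, i) \<in> (cutF i F)\<^sup>*" using rt_prop[OF fc, of x] a by simp
    moreover have "(cutF i F)\<^sup>* \<subseteq> F\<^sup>*" by (rule rtrancl_mono) (auto simp: cutF_def)
    ultimately have "(x, i) \<in> F\<^sup>*" by blast
    then have "(i, i) \<in> F\<^sup>+" using ix by (meson rtrancl_into_trancl2)
    then show False using fa(2) unfolding acyclic_def by blast
  qed
  ultimately show ?thesis using eq by blast
qed

lemma fiber_sum:
  fixes G :: "('n::finite \<times> 'n) set"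
  assumes g: "goodF E G" and s: "sinkF G i"
  shows "((1 + real (card {k. (i, k) \<in> E})) * ind (rt G i = j) - (\<Sum>k\<in>{k. (i, k) \<in> E}. ind (rt G k = j)))
       + (\<Sum>x\<in>{x. (i, x) \<in> E \<and> rt G x \<noteq> i}.
            (1 + real (card {k. (i, k) \<in> E})) * ind (rt (insert (i, x) G) i = j)
            - (\<Sum>k\<in>{k. (i, k) \<in> E}. ind (rt (insert (i, x) G) k = j)))
     = (1 + real (card {x. (i, x) \<in> E \<and> rt G x \<noteq> i})) * ind (i = j)"
proof -
  define A where "A = {k. (i, k) \<in> E}"
  define Ao where "Ao = {x. (i, x) \<in> E \<and> rt G x \<noteq> i}"
  define Ai where "Ai = {x. (i, x) \<in> E \<and> rt G x = i}"
  define S where "S = (\<Sum>k\<in>Ao. ind (rt G k = j))"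
  define e where "e = ind (i = j)"
  have AU: "A = Ai \<union> Ao" "Ai \<inter> Ao = {}" unfolding A_def Ai_def Ao_def by auto
  have fin: "finite Ai" "finite Ao" by auto
  have cA: "real (card A) = real (card Ai) + real (card Ao)"
    using AU fin card_Un_disjoint by (metis of_nat_add)
  have split: "(\<Sum>k\<in>A. f k) = (\<Sum>k\<in>Ai. f k) + (\<Sum>k\<in>Ao. f k)" for f :: "'n \<Rightarrow> real"
    using AU fin by (simp add: sum.union_disjoint)
  have rti: "rt G i = i" by (rule rt_sink_self[OF g s])
  have h0: "(\<Sum>k\<in>A. ind (rt G k = j)) = real (card Ai) * e + S"
  proof -
    have "(\<Sum>k\<in>Ai. ind (rt G k = j)) = (\<Sum>k\<in>Ai. e)"
      by (rule sum.cong) (auto simp: Ai_def e_def)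
    then show ?thesis using split S_def by simp
  qed
  have hx: "(1 + real (card A)) * ind (rt (insert (i, x) G) i = j)
            - (\<Sum>k\<in>A. ind (rt (insert (i, x) G) k = j))
          = (1 + real (card A) - real (card Ai)) * ind (rt G x = j) - S" if x: "x \<in> Ao" for x
  proof -
    have xE: "(i, x) \<in> E" "rt G x \<noteq> i" using x unfolding Ao_def by auto
    have r: "rt (insert (i, x) G) k = (if rt G k = i then rt G x else rt G k)" for k
      by (rule insert_rt[OF g s xE])
    have "(\<Sum>k\<in>Ai. ind (rt (insert (i, x) G) k = j)) = (\<Sum>k\<in>Ai. ind (rt G x = j))"
      by (rule sum.cong) (auto simp: Ai_def r)
    moreover have "(\<Sum>k\<in>Ao. ind (rt (insert (i, x) G) k = j)) = S"
      unfolding S_def by (rule sum.cong) (auto simp: Ao_def r)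
    ultimately have "(\<Sum>k\<in>A. ind (rt (insert (i, x) G) k = j)) = real (card Ai) * ind (rt G x = j) + S"
      using split by simp
    moreover have "rt (insert (i, x) G) i = rt G x" using r[of i] rti by simp
    ultimately show ?thesis by (simp add: algebra_simps)
  qed
  have "(\<Sum>x\<in>Ao. (1 + real (card A)) * ind (rt (insert (i, x) G) i = j)
            - (\<Sum>k\<in>A. ind (rt (insert (i, x) G) k = j)))
      = (\<Sum>x\<in>Ao. (1 + real (card A) - real (card Ai)) * ind (rt G x = j) - S)"
    by (rule sum.cong) (auto simp: hx)
  also have "\<dots> = (1 + real (card A) - real (card Ai)) * S - real (card Ao) * S"
    by (simp add: sum_subtractf sum_distrib_left S_def)
  finally have "(\<Sum>x\<in>Ao. (1 + real (card A)) * ind (rt (insert (i, x) G) i = j)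
            - (\<Sum>k\<in>A. ind (rt (insert (i, x) G) k = j)))
      = (1 + real (card A) - real (card Ai)) * S - real (card Ao) * S" .
  then show ?thesis unfolding A_def[symmetric] Ao_def[symmetric] e_def[symmetric]
    using h0 rti cA by (simp add: algebra_simps e_def)
qed

lemma fiber_eq:
  fixes E :: "('n::finite \<times> 'n) set"
  assumes g: "goodF E G" and s: "sinkF G i"
  shows "{F. F \<in> {F. goodF E F} \<and> cutF i F = G}
       = insert G ((\<lambda>x. insert (i, x) G) ` {x. (i, x) \<in> E \<and> rt G x \<noteq> i})"
proof
  show "{F. F \<in> {F. goodF E F} \<and> cutF i F = G}
       \<subseteq> insert G ((\<lambda>x. insert (i, x) G) ` {x. (i, x) \<in> E \<and> rt G x \<noteq> i})"
  proof
    fix F assume "F \<in> {F. F \<in> {F. goodF E F} \<and> cutF i F = G}"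
    then have F: "goodF E F" "cutF i F = G" by auto
    show "F \<in> insert G ((\<lambda>x. insert (i, x) G) ` {x. (i, x) \<in> E \<and> rt G x \<noteq> i})"
    proof (cases "sinkF F i")
      case True then show ?thesis using cut_id[OF True] F by simp
    next
      case False
      then obtain x where eq: "F = insert (i, x) (cutF i F)" and x: "(i, x) \<in> E" "rt (cutF i F) x \<noteq> i"
        using nonsink_decomp[OF F(1)] by blast
      have Feq: "F = insert (i, x) G" using eq unfolding F(2) .
      have "rt G x \<noteq> i" using x(2) unfolding F(2) .
      then have "x \<in> {x. (i, x) \<in> E \<and> rt G x \<noteq> i}" using x(1) by simp
      then show ?thesis unfolding Feq by blast
    qed
  qed
  show "insert G ((\<lambda>x. insert (i, x) G) ` {x. (i, x) \<in> E \<and> rt G x \<noteq> i})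
       \<subseteq> {F. F \<in> {F. goodF E F} \<and> cutF i F = G}"
  proof
    fix F assume "F \<in> insert G ((\<lambda>x. insert (i, x) G) ` {x. (i, x) \<in> E \<and> rt G x \<noteq> i})"
    then show "F \<in> {F. F \<in> {F. goodF E F} \<and> cutF i F = G}"
    proof
      assume "F = G" then show ?thesis using g cut_id[OF s] by simp
    next
      assume "F \<in> (\<lambda>x. insert (i, x) G) ` {x. (i, x) \<in> E \<and> rt G x \<noteq> i}"
      then obtain x where x: "F = insert (i, x) G" "(i, x) \<in> E" "rt G x \<noteq> i" by blast
      have "goodF E F" using insert_good[OF g s x(2,3)] x(1) by simp
      moreover have "cutF i (insert (i, x) G) = cutF i G" unfolding cutF_def by auto
      then have "cutF i F = G" unfolding x(1) cut_id[OF s] .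
      ultimately show ?thesis by blast
    qed
  qed
qed

lemma fiber_card:
  fixes G :: "('n::finite \<times> 'n) set"
  assumes s: "sinkF G i"
  shows "G \<notin> (\<lambda>x. insert (i, x) G) ` X" "inj_on (\<lambda>x. insert (i, x) G) X"
  using s unfolding sinkF_def inj_on_def by auto

lemma fiber_total:
  fixes E :: "('n::finite \<times> 'n) set"
  assumes g: "goodF E G" and s: "sinkF G i"
  shows "(\<Sum>F\<in>{F. F \<in> {F. goodF E F} \<and> cutF i F = G}.
            (1 + real (card {k. (i, k) \<in> E})) * ind (rt F i = j) - (\<Sum>k\<in>{k. (i, k) \<in> E}. ind (rt F k = j)))
       = (\<Sum>F\<in>{F. F \<in> {F. goodF E F} \<and> cutF i F = G}. ind (i = j))"
proof -
  define Ao where "Ao = {x. (i, x) \<in> E \<and> rt G x \<noteq> i}"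
  define h where "h F = (1 + real (card {k. (i, k) \<in> E})) * ind (rt F i = j) - (\<Sum>k\<in>{k. (i, k) \<in> E}. ind (rt F k = j))" for F
  have fe: "{F. F \<in> {F. goodF E F} \<and> cutF i F = G} = insert G ((\<lambda>x. insert (i, x) G) ` Ao)"
    unfolding Ao_def by (rule fiber_eq[OF g s])
  have fin: "finite Ao" by simp
  note fc = fiber_card[OF s, of Ao]
  have "(\<Sum>F\<in>insert G ((\<lambda>x. insert (i, x) G) ` Ao). h F) = h G + (\<Sum>F\<in>(\<lambda>x. insert (i, x) G) ` Ao. h F)"
    using fc(1) fin by (simp add: sum.insert)
  also have "(\<Sum>F\<in>(\<lambda>x. insert (i, x) G) ` Ao. h F) = (\<Sum>x\<in>Ao. h (insert (i, x) G))"
    using fc(2) by (simp add: sum.reindex)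
  also have "h G + (\<Sum>x\<in>Ao. h (insert (i, x) G)) = (1 + real (card Ao)) * ind (i = j)"
    unfolding h_def Ao_def by (rule fiber_sum[OF g s])
  also have "\<dots> = (\<Sum>F\<in>insert G ((\<lambda>x. insert (i, x) G) ` Ao). ind (i = j))"
    using fc fin by (simp add: card_insert_disjoint card_image algebra_simps)
  finally show ?thesis unfolding fe h_def .
qed

lemma finite_forests: "finite (X :: ('n::finite \<times> 'n) set set)"
  by (rule finite_subset[OF subset_UNIV]) simp

lemma count_identity:
  fixes E :: "('n::finite \<times> 'n) set"
  shows "(1 + real (card {k. (i, k) \<in> E})) * (\<Sum>F\<in>{F. goodF E F}. ind (rt F i = j))
       = ind (i = j) * real (card {F. goodF E F}) + (\<Sum>k\<in>{k. (i, k) \<in> E}. \<Sum>F\<in>{F. goodF E F}. ind (rt F k = j))"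
proof -
  define Fs where "Fs = {F. goodF E F}"
  define h where "h F = (1 + real (card {k. (i, k) \<in> E})) * ind (rt F i = j) - (\<Sum>k\<in>{k. (i, k) \<in> E}. ind (rt F k = j))" for F
  have fin: "finite Fs" by (rule finite_forests)
  have "(\<Sum>F\<in>Fs. h F) = (\<Sum>G\<in>cutF i ` Fs. \<Sum>F\<in>{F. F \<in> Fs \<and> cutF i F = G}. h F)"
    by (rule sum.image_gen[OF fin])
  also have "\<dots> = (\<Sum>G\<in>cutF i ` Fs. \<Sum>F\<in>{F. F \<in> Fs \<and> cutF i F = G}. ind (i = j))"
  proof (rule sum.cong[OF refl])
    fix G assume "G \<in> cutF i ` Fs"
    then obtain F0 where "F0 \<in> Fs" "G = cutF i F0" by blast
    then have g: "goodF E G" and s: "sinkF G i" using cut_good cut_sink unfolding Fs_def by auto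
    show "(\<Sum>F\<in>{F. F \<in> Fs \<and> cutF i F = G}. h F) = (\<Sum>F\<in>{F. F \<in> Fs \<and> cutF i F = G}. ind (i = j))"
      unfolding Fs_def h_def by (rule fiber_total[OF g s])
  qed
  also have "\<dots> = (\<Sum>F\<in>Fs. ind (i = j))"
    by (rule sum.image_gen[OF fin, symmetric])
  finally have "(\<Sum>F\<in>Fs. h F) = ind (i = j) * real (card Fs)" by simp
  moreover have "(\<Sum>F\<in>Fs. h F) = (1 + real (card {k. (i, k) \<in> E})) * (\<Sum>F\<in>Fs. ind (rt F i = j))
       - (\<Sum>k\<in>{k. (i, k) \<in> E}. \<Sum>F\<in>Fs. ind (rt F k = j))"
    unfolding h_def by (simp add: sum_subtractf sum_distrib_left sum.swap[of _ Fs])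
  ultimately show ?thesis unfolding Fs_def by simp
qed

definition PM :: "('n::finite \<times> 'n) set \<Rightarrow> real^'n^'n" where
  "PM E = (\<chi> a b. (\<Sum>F\<in>{F. goodF E F}. ind (rt F a = b)) / real (card {F. goodF E F}))"

lemma card_forests_pos: "card {F. goodF (E :: ('n::finite \<times> 'n) set) F} > 0"
proof -
  have "goodF E {}" unfolding goodF_def funcF_def acyclic_def by simp
  then show ?thesis using finite_forests card_gt_0_iff by blast
qed

lemma outdeg_eq: "outdeg E a = card {k. (a, k) \<in> E}" unfolding outdeg_def by simp

lemma sum_if_eq: "(\<Sum>k\<in>(UNIV :: 'n::finite set). if (a, k) \<in> E then f k else 0) = (\<Sum>k\<in>{k. (a, k) \<in> E}. f k)"
  by (simp add: sum.If_cases)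

lemma sum_if_eq2: "(\<Sum>k\<in>(UNIV :: 'n::finite set). if (k, b) \<in> E then f k else 0) = (\<Sum>k\<in>{k. (k, b) \<in> E}. f k)"
  by (simp add: sum.If_cases)

lemma right_inv: "(mat 1 + laplacian E) ** PM (E :: ('n::finite \<times> 'n) set) = mat 1"
proof -
  define N where "N = real (card {F. goodF E F})"
  have N: "N > 0" unfolding N_def using card_forests_pos by simp
  define c where "c a b = (\<Sum>F\<in>{F. goodF E F}. ind (rt F a = b))" for a b
  have P: "PM E $ a $ b = c a b / N" for a b unfolding PM_def c_def N_def by simp
  show ?thesis
  proof (rule vec_eq_iff[THEN iffD2, OF allI], rule vec_eq_iff[THEN iffD2, OF allI])
    fix a b
    have "((mat 1 + laplacian E) ** PM E) $ a $ b
        = (\<Sum>k\<in>UNIV. (if a = k then (1 + real (outdeg E a)) * PM E $ k $ b else 0)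
                     - (if (a, k) \<in> E then PM E $ k $ b else 0))"
      unfolding matrix_matrix_mult_def laplacian_def
      by (auto intro!: sum.cong simp: mat_def algebra_simps)
    also have "\<dots> = (1 + real (outdeg E a)) * PM E $ a $ b - (\<Sum>k\<in>{k. (a, k) \<in> E}. PM E $ k $ b)"
      by (simp add: sum_subtractf sum_if_eq)
    also have "\<dots> = ((1 + real (outdeg E a)) * c a b - (\<Sum>k\<in>{k. (a, k) \<in> E}. c k b)) / N"
      unfolding P by (simp add: sum_divide_distrib diff_divide_distrib)
    also have "\<dots> = ind (a = b) * N / N"
      using count_identity[of a E b] unfolding c_def N_def outdeg_eq by simp
    also have "\<dots> = mat 1 $ a $ b" using N by (simp add: ind_def mat_def)
    finally show "((mat 1 + laplacian E) ** PM E) $ a $ b = mat 1 $ a $ b" .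
  qed
qed

lemma forest_matrix_PM: "forest_matrix (E :: ('n::finite \<times> 'n) set) = PM E"
proof -
  have r: "(mat 1 + laplacian E) ** PM E = mat 1" by (rule right_inv)
  then have l: "PM E ** (mat 1 + laplacian E) = mat 1" using matrix_left_right_inverse by blast
  define B where "B = matrix_inv (mat 1 + laplacian E)"
  have "(mat 1 + laplacian E) ** B = mat 1 \<and> B ** (mat 1 + laplacian E) = mat 1"
    unfolding B_def matrix_inv_def by (rule someI[of _ "PM E"]) (use r l in blast)
  then have "B = B ** ((mat 1 + laplacian E) ** PM E)" using r by (simp add: matrix_mul_rid)
  also have "\<dots> = PM E" using \<open>_ \<and> _\<close> by (simp add: matrix_mul_assoc matrix_mul_lid)
  finally show ?thesis unfolding forest_matrix_def B_def .
qed

lemma left_identity: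
  fixes E :: "('n::finite \<times> 'n) set"
  shows "(\<Sum>k\<in>{k. (k, b) \<in> E}. forest_matrix E $ a $ k) = (1 + real (outdeg E b)) * forest_matrix E $ a $ b - ind (a = b)"
proof -
  have r: "(mat 1 + laplacian E) ** PM E = mat 1" by (rule right_inv)
  then have l: "PM E ** (mat 1 + laplacian E) = mat 1" using matrix_left_right_inverse by blast
  have "(PM E ** (mat 1 + laplacian E)) $ a $ b
        = (\<Sum>k\<in>UNIV. (if k = b then (1 + real (outdeg E b)) * PM E $ a $ k else 0)
                     - (if (k, b) \<in> E then PM E $ a $ k else 0))"
    unfolding matrix_matrix_mult_def laplacian_def
    by (auto intro!: sum.cong simp: mat_def algebra_simps)
  also have "\<dots> = (1 + real (outdeg E b)) * PM E $ a $ b - (\<Sum>k\<in>{k. (k, b) \<in> E}. PM E $ a $ k)"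
    by (simp add: sum_subtractf sum_if_eq2)
  finally show ?thesis using l unfolding forest_matrix_PM by (simp add: mat_def ind_def)
qed

lemma chernoff_upper:
  fixes p :: "'a pmf" and g :: "'a \<Rightarrow> real"
  assumes fin: "finite (set_pmf p)" and th: "\<theta> \<ge> 0"
  shows "measure_pmf.prob (Pi_pmf {..<l} d (\<lambda>_. p)) {\<phi>. a \<le> (\<Sum>t<l. g (\<phi> t))}
         \<le> (measure_pmf.expectation p (\<lambda>x. exp (\<theta> * g x))) ^ l / exp (\<theta> * a)"
proof -
  define Q where "Q = Pi_pmf {..<l} d (\<lambda>_. p)"
  define u where "u \<phi> = (\<Prod>t\<in>{..<l}. exp (\<theta> * g (\<phi> t)))" for \<phi>
  have u_eq: "u \<phi> = exp (\<theta> * (\<Sum>t<l. g (\<phi> t)))" for \<phi>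
    unfolding u_def by (simp add: exp_sum sum_distrib_left)
  have int: "integrable (measure_pmf Q) u"
    unfolding Q_def u_def
    by (rule integrable_prod_Pi_pmf[where f = "\<lambda>_ x. exp (\<theta> * g x)"]) (auto intro: integrable_measure_pmf_finite[OF fin])
  have "measure_pmf.prob Q {\<phi>. a \<le> (\<Sum>t<l. g (\<phi> t))} \<le> measure_pmf.prob Q {\<phi>\<in>space (measure_pmf Q). exp (\<theta> * a) \<le> u \<phi>}"
  proof (rule measure_pmf.finite_measure_mono)
    show "{\<phi>. a \<le> (\<Sum>t<l. g (\<phi> t))} \<subseteq> {\<phi>\<in>space (measure_pmf Q). exp (\<theta> * a) \<le> u \<phi>}"
      using th by (auto simp: u_eq intro: mult_left_mono)
  qed simp
  also have "\<dots> \<le> measure_pmf.expectation Q u / exp (\<theta> * a)"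
    by (rule integral_Markov_inequality_measure[OF int]) (auto simp: u_def intro!: AE_I2 prod_nonneg)
  also have "measure_pmf.expectation Q u = (\<Prod>t\<in>{..<l}. measure_pmf.expectation p (\<lambda>x. exp (\<theta> * g x)))"
    unfolding Q_def u_def
    by (rule expectation_prod_Pi_pmf[where f = "\<lambda>_ x. exp (\<theta> * g x)"]) (auto intro: integrable_measure_pmf_finite[OF fin])
  also have "\<dots> = (measure_pmf.expectation p (\<lambda>x. exp (\<theta> * g x))) ^ l" by simp
  finally show ?thesis unfolding Q_def .
qed

lemma two_sided:
  fixes p :: "'a pmf" and g :: "'a \<Rightarrow> real"
  assumes fin: "finite (set_pmf p)" and l: "l > 0" and th: "\<theta>1 \<ge> 0" "\<theta>2 \<ge> 0"
    and h1: "(measure_pmf.expectation p (\<lambda>x. exp (\<theta>1 * (g x - \<mu>)))) ^ l / exp (\<theta>1 * (real l * s)) \<le> \<delta> / 2"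
    and h2: "(measure_pmf.expectation p (\<lambda>x. exp (\<theta>2 * (\<mu> - g x)))) ^ l / exp (\<theta>2 * (real l * s)) \<le> \<delta> / 2"
  shows "1 - \<delta> \<le> measure_pmf.prob (Pi_pmf {..<l} d (\<lambda>_. p))
           {\<phi>. \<mu> - s \<le> (1 / real l) * (\<Sum>t<l. g (\<phi> t)) \<and> (1 / real l) * (\<Sum>t<l. g (\<phi> t)) \<le> \<mu> + s}"
proof -
  define Q where "Q = Pi_pmf {..<l} d (\<lambda>_. p)"
  define G where "G = {\<phi>. \<mu> - s \<le> (1 / real l) * (\<Sum>t<l. g (\<phi> t)) \<and> (1 / real l) * (\<Sum>t<l. g (\<phi> t)) \<le> \<mu> + s}"
  define U where "U = {\<phi>. real l * s \<le> (\<Sum>t<l. g (\<phi> t) - \<mu>)}"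
  define L where "L = {\<phi>. real l * s \<le> (\<Sum>t<l. \<mu> - g (\<phi> t))}"
  have pU: "measure_pmf.prob Q U \<le> \<delta> / 2"
    unfolding Q_def U_def using chernoff_upper[OF fin th(1), of l d "real l * s" "\<lambda>x. g x - \<mu>"] h1 by linarith
  have pL: "measure_pmf.prob Q L \<le> \<delta> / 2"
    unfolding Q_def L_def using chernoff_upper[OF fin th(2), of l d "real l * s" "\<lambda>x. \<mu> - g x"] h2 by linarith
  have lpos: "real l > 0" using l by simp
  have sub: "UNIV - G \<subseteq> U \<union> L"
  proof
    fix \<phi> assume "\<phi> \<in> UNIV - G"
    define S where "S = (\<Sum>t<l. g (\<phi> t))"
    have sU: "(\<Sum>t<l. g (\<phi> t) - \<mu>) = S - real l * \<mu>" unfolding S_def by (simp add: sum_subtractf)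
    have sL: "(\<Sum>t<l. \<mu> - g (\<phi> t)) = real l * \<mu> - S" unfolding S_def by (simp add: sum_subtractf)
    have "\<not> (\<mu> - s \<le> S / real l) \<or> \<not> (S / real l \<le> \<mu> + s)"
      using \<open>\<phi> \<in> UNIV - G\<close> unfolding G_def S_def by auto
    then have "real l * \<mu> - S > real l * s \<or> S - real l * \<mu> > real l * s"
      using lpos by (auto simp: field_simps)
    then show "\<phi> \<in> U \<union> L" unfolding U_def L_def using sU sL by auto
  qed
  have "measure_pmf.prob Q (UNIV - G) \<le> measure_pmf.prob Q (U \<union> L)"
    by (rule measure_pmf.finite_measure_mono[OF sub]) simp
  also have "\<dots> \<le> measure_pmf.prob Q U + measure_pmf.prob Q L"
    by (rule measure_Un_le) simp_all
  finally have "measure_pmf.prob Q (UNIV - G) \<le> \<delta>" using pU pL by simp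
  moreover have "measure_pmf.prob Q (UNIV - G) = 1 - measure_pmf.prob Q G"
    using measure_pmf.prob_compl[of G Q] by simp
  ultimately show ?thesis unfolding Q_def G_def by simp
qed

lemma hoeffding_mgf:
  fixes p :: "'a pmf" and g :: "'a \<Rightarrow> real"
  assumes fin: "finite (set_pmf p)" and bnd: "\<And>x. x \<in> set_pmf p \<Longrightarrow> lo \<le> g x \<and> g x \<le> hi" and th: "\<theta> \<ge> 0"
  shows "measure_pmf.expectation p (\<lambda>x. exp (\<theta> * (g x - measure_pmf.expectation p g))) \<le> exp (\<theta>\<^sup>2 * (hi - lo)\<^sup>2 / 8)"
proof (cases "\<theta> = 0")
  case True then show ?thesis by simp
next
  case False
  then have th': "\<theta> > 0" using th by simp
  have ib: "interval_bounded_random_variable (measure_pmf p) g lo hi"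
  proof (intro interval_bounded_random_variable.intro interval_bounded_random_variable_axioms.intro)
    show "prob_space (measure_pmf p)" by (rule measure_pmf.prob_space_axioms)
    show "g \<in> borel_measurable (measure_pmf p)" by simp
    show "AE x in measure_pmf p. g x \<in> {lo..hi}" by (rule AE_pmfI) (use bnd in simp)
  qed
  interpret interval_bounded_random_variable "measure_pmf p" g lo hi by (rule ib)
  have "ennreal (measure_pmf.expectation p (\<lambda>x. exp (\<theta> * (g x - measure_pmf.expectation p g))))
      = nn_integral (measure_pmf p) (\<lambda>x. exp (\<theta> * (g x - measure_pmf.expectation p g)))"
    by (rule nn_integral_eq_integral[symmetric]) (auto intro: integrable_measure_pmf_finite[OF fin])
  also have "\<dots> \<le> ennreal (exp (\<theta>\<^sup>2 * (hi - lo)\<^sup>2 / 8))"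
    by (rule Hoeffdings_lemma_nn_integral[OF th'])
  finally show ?thesis by (simp add: ennreal_le_iff)
qed

lemma exp_bound_series:
  fixes y \<theta> :: real
  assumes y: "\<bar>y\<bar> \<le> 1" and th: "\<theta> \<ge> 0"
  shows "exp (\<theta> * y) \<le> 1 + \<theta> * y + y\<^sup>2 * (exp \<theta> - 1 - \<theta>)"
proof -
  have s1: "summable (\<lambda>n. inverse (fact (n + 2)) * (\<theta> * y) ^ (n + 2))"
    using summable_exp[of "\<theta> * y"] by (subst summable_iff_shift[where k = 2]) (simp add: divide_inverse mult.commute)
  have s2: "summable (\<lambda>n. inverse (fact (n + 2)) * \<theta> ^ (n + 2))"
    using summable_exp[of "\<theta>"] by (subst summable_iff_shift[where k = 2]) (simp add: divide_inverse mult.commute)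
  have "exp (\<theta> * y) - 1 - \<theta> * y = (\<Sum>n. inverse (fact (n + 2)) * (\<theta> * y) ^ (n + 2))"
    using exp_first_two_terms[of "\<theta> * y"] by simp
  also have "\<dots> \<le> (\<Sum>n. y\<^sup>2 * (inverse (fact (n + 2)) * \<theta> ^ (n + 2)))"
  proof (rule suminf_le)
    show "summable (\<lambda>n. y\<^sup>2 * (inverse (fact (n + 2)) * \<theta> ^ (n + 2)))" using s2 by (rule summable_mult)
    show "summable (\<lambda>n. inverse (fact (n + 2)) * (\<theta> * y) ^ (n + 2))" by (rule s1)
    fix n
    have "\<bar>y\<bar> ^ n \<le> 1" using y by (intro power_le_one) auto
    then have "y ^ n \<le> 1" by (metis abs_ge_self order_trans power_abs)
    then have "y\<^sup>2 * y ^ n \<le> y\<^sup>2" by (intro mult_left_le) auto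
    moreover have "y ^ (n + 2) = y\<^sup>2 * y ^ n" by (simp only: power_add mult.commute)
    ultimately have "y ^ (n + 2) \<le> y\<^sup>2" by metis
    then have "y ^ (n + 2) * (inverse (fact (n + 2)) * \<theta> ^ (n + 2)) \<le> y\<^sup>2 * (inverse (fact (n + 2)) * \<theta> ^ (n + 2))"
      using th by (intro mult_right_mono) auto
    then show "inverse (fact (n + 2)) * (\<theta> * y) ^ (n + 2) \<le> y\<^sup>2 * (inverse (fact (n + 2)) * \<theta> ^ (n + 2))"
      by (simp add: power_mult_distrib algebra_simps)
  qed
  also have "\<dots> = y\<^sup>2 * (\<Sum>n. inverse (fact (n + 2)) * \<theta> ^ (n + 2))"
    using s2 by (rule suminf_mult)
  also have "(\<Sum>n. inverse (fact (n + 2)) * \<theta> ^ (n + 2)) = exp \<theta> - 1 - \<theta>"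
    using exp_first_two_terms[of \<theta>] by simp
  finally show ?thesis by simp
qed

lemma bennett_mgf:
  fixes p :: "'a pmf" and Y :: "'a \<Rightarrow> real"
  assumes fin: "finite (set_pmf p)" and bnd: "\<And>x. x \<in> set_pmf p \<Longrightarrow> \<bar>Y x\<bar> \<le> 1"
    and E0: "measure_pmf.expectation p Y = 0" and th: "\<theta> \<ge> 0"
  shows "measure_pmf.expectation p (\<lambda>x. exp (\<theta> * Y x))
         \<le> exp (measure_pmf.expectation p (\<lambda>x. (Y x)\<^sup>2) * (exp \<theta> - 1 - \<theta>))"
proof -
  define c where "c = exp \<theta> - 1 - \<theta>"
  have int: "integrable (measure_pmf p) f" for f :: "'a \<Rightarrow> real" by (rule integrable_measure_pmf_finite[OF fin])
  have "measure_pmf.expectation p (\<lambda>x. exp (\<theta> * Y x)) \<le> measure_pmf.expectation p (\<lambda>x. 1 + \<theta> * Y x + (Y x)\<^sup>2 * c)"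
    by (rule integral_mono_AE[OF int int]) (auto intro!: AE_pmfI exp_bound_series bnd th simp: c_def)
  also have "\<dots> = 1 + \<theta> * measure_pmf.expectation p Y + measure_pmf.expectation p (\<lambda>x. (Y x)\<^sup>2) * c"
    by (simp add: int)
  also have "\<dots> = 1 + measure_pmf.expectation p (\<lambda>x. (Y x)\<^sup>2) * c" using E0 by simp
  also have "\<dots> \<le> exp (measure_pmf.expectation p (\<lambda>x. (Y x)\<^sup>2) * c)" by (rule exp_ge_add_one_self)
  finally show ?thesis unfolding c_def .
qed

lemma fact_ge_pow3: "2 * 3 ^ n \<le> (fact (n + 2) :: real)"
proof (induction n)
  case 0 then show ?case by simp
next
  case (Suc n)
  have "(fact (Suc n + 2) :: real) = real (n + 3) * fact (n + 2)"
    by (simp add: fact_Suc algebra_simps)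
  also have "\<dots> \<ge> 3 * fact (n + 2)" by (intro mult_right_mono) auto
  finally have "3 * fact (n + 2) \<le> (fact (Suc n + 2) :: real)" .
  moreover have "2 * 3 ^ Suc n = 3 * (2 * 3 ^ n :: real)" by simp
  ultimately show ?case using Suc by linarith
qed

lemma exp_minus_bound:
  fixes \<theta> :: real
  assumes "0 \<le> \<theta>" "\<theta> < 3"
  shows "exp \<theta> - 1 - \<theta> \<le> \<theta>\<^sup>2 / (2 * (1 - \<theta> / 3))"
proof -
  have q: "norm (\<theta> / 3) < 1" using assms by simp
  have s2: "summable (\<lambda>n. inverse (fact (n + 2)) * \<theta> ^ (n + 2))"
    using summable_exp[of "\<theta>"] by (subst summable_iff_shift[where k = 2]) (simp add: divide_inverse mult.commute)
  have sg: "summable (\<lambda>n. \<theta>\<^sup>2 / 2 * (\<theta> / 3) ^ n)"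
    by (rule summable_mult[OF summable_geometric[OF q]])
  have "exp \<theta> - 1 - \<theta> = (\<Sum>n. inverse (fact (n + 2)) * \<theta> ^ (n + 2))"
    using exp_first_two_terms[of \<theta>] by simp
  also have "\<dots> \<le> (\<Sum>n. \<theta>\<^sup>2 / 2 * (\<theta> / 3) ^ n)"
  proof (rule suminf_le[OF _ s2 sg])
    fix n
    have f: "inverse (fact (n + 2)) \<le> inverse (2 * 3 ^ n :: real)"
      by (rule le_imp_inverse_le[OF fact_ge_pow3]) simp
    have "inverse (fact (n + 2)) * \<theta> ^ (n + 2) \<le> inverse (2 * 3 ^ n) * \<theta> ^ (n + 2)"
      using assms(1) by (intro mult_right_mono[OF f]) simp
    also have "\<dots> = \<theta>\<^sup>2 / 2 * (\<theta> / 3) ^ n"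
      by (simp add: power_add power_divide field_simps power2_eq_square)
    finally show "inverse (fact (n + 2)) * \<theta> ^ (n + 2) \<le> \<theta>\<^sup>2 / 2 * (\<theta> / 3) ^ n" .
  qed
  also have "\<dots> = \<theta>\<^sup>2 / 2 * (\<Sum>n. (\<theta> / 3) ^ n)"
    by (rule suminf_mult[OF summable_geometric[OF q]])
  also have "\<dots> = \<theta>\<^sup>2 / 2 * (1 / (1 - \<theta> / 3))"
    using suminf_geometric[OF q] by simp
  also have "\<dots> = \<theta>\<^sup>2 / (2 * (1 - \<theta> / 3))" by simp
  finally show ?thesis .
qed

lemma bern_alg:
  fixes v t :: real
  assumes "v > 0" "t > 0"
  shows "v * (3 * t / (3 * v + t))\<^sup>2 / (2 * (1 - (3 * t / (3 * v + t)) / 3)) - (3 * t / (3 * v + t)) * t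
         = - (t\<^sup>2 / (2 * (v + t / 3)))"
proof -
  define T where "T = 3 * v + t"
  have a: "T > 0" using assms unfolding T_def by simp
  have b: "1 - (3 * t / T) / 3 = 3 * v / T" using a unfolding T_def by (simp add: field_simps)
  have c: "v * (3 * t / T)\<^sup>2 / (2 * (3 * v / T)) = (3 * t / T)\<^sup>2 * T / 6"
    using a assms by (simp add: field_simps)
  have d: "(3 * t / T)\<^sup>2 * T / 6 = 3 * t\<^sup>2 / (2 * T)"
    using a by (simp add: field_simps power2_eq_square)
  have e: "3 * t\<^sup>2 / (2 * T) - (3 * t / T) * t = - (3 * t\<^sup>2 / (2 * T))"
    using a by (simp add: field_simps power2_eq_square)
  have f: "t\<^sup>2 / (2 * (v + t / 3)) = 3 * t\<^sup>2 / (2 * T)"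
    unfolding T_def using assms by (simp add: field_simps)
  show ?thesis unfolding T_def[symmetric] b c d e f ..
qed

lemma bernstein_tail:
  fixes p :: "'a pmf" and Y :: "'a \<Rightarrow> real"
  assumes fin: "finite (set_pmf p)" and bnd: "\<And>x. x \<in> set_pmf p \<Longrightarrow> \<bar>Y x\<bar> \<le> 1"
    and E0: "measure_pmf.expectation p Y = 0"
    and var: "measure_pmf.expectation p (\<lambda>x. (Y x)\<^sup>2) \<le> v" and v: "v \<ge> 0" and t: "t > 0"
  shows "\<exists>\<theta>\<ge>0. (measure_pmf.expectation p (\<lambda>x. exp (\<theta> * Y x))) ^ l / exp (\<theta> * (real l * t))
            \<le> exp (- (real l * (t\<^sup>2 / (2 * (v + t / 3)))))"
proof -
  define w where "w = measure_pmf.expectation p (\<lambda>x. (Y x)\<^sup>2)"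
  have w0: "w \<ge> 0" unfolding w_def by (rule Bochner_Integration.integral_nonneg_AE) simp
  have M0: "measure_pmf.expectation p (\<lambda>x. exp (\<theta> * Y x)) \<ge> 0" for \<theta>
    by (rule Bochner_Integration.integral_nonneg_AE) simp
  show ?thesis
  proof (cases "v = 0")
    case True
    then have "w = 0" using var w0 unfolding w_def by simp
    then have "measure_pmf.expectation p (\<lambda>x. exp (3 * Y x)) \<le> 1"
      using bennett_mgf[OF fin bnd E0, of 3] unfolding w_def by simp
    then have "(measure_pmf.expectation p (\<lambda>x. exp (3 * Y x))) ^ l \<le> 1"
      using M0 by (intro power_le_one) auto
    then have "(measure_pmf.expectation p (\<lambda>x. exp (3 * Y x))) ^ l / exp (3 * (real l * t)) \<le> 1 / exp (3 * (real l * t))"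
      by (intro divide_right_mono) auto
    also have "\<dots> = exp (- (3 * (real l * t)))" by (simp add: exp_minus field_simps)
    also have "\<dots> \<le> exp (- (real l * (t\<^sup>2 / (2 * (v + t / 3)))))"
      using True t by (simp add: power2_eq_square field_simps)
    finally show ?thesis by (intro exI[of _ 3]) simp
  next
    case False
    then have vp: "v > 0" using v by simp
    define \<theta> where "\<theta> = 3 * t / (3 * v + t)"
    have th0: "\<theta> > 0" unfolding \<theta>_def using vp t by simp
    have th3: "\<theta> < 3" unfolding \<theta>_def using vp t by (simp add: field_simps)
    define A where "A = v * \<theta>\<^sup>2 / (2 * (1 - \<theta> / 3))"
    have c0: "exp \<theta> - 1 - \<theta> \<ge> 0" using exp_ge_add_one_self[of \<theta>] by linarith
    have "measure_pmf.expectation p (\<lambda>x. exp (\<theta> * Y x)) \<le> exp (w * (exp \<theta> - 1 - \<theta>))"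
      using bennett_mgf[OF fin bnd E0, of \<theta>] th0 unfolding w_def by simp
    also have "\<dots> \<le> exp A"
      unfolding A_def using mult_mono[OF var[folded w_def] exp_minus_bound[OF less_imp_le[OF th0] th3] v c0]
      by (simp add: mult.assoc)
    finally have "(measure_pmf.expectation p (\<lambda>x. exp (\<theta> * Y x))) ^ l \<le> (exp A) ^ l"
      using M0 by (intro power_mono) auto
    also have "\<dots> = exp (real l * A)" by (rule exp_of_nat_mult[symmetric])
    finally have "(measure_pmf.expectation p (\<lambda>x. exp (\<theta> * Y x))) ^ l / exp (\<theta> * (real l * t)) \<le> exp (real l * A) / exp (\<theta> * (real l * t))"
      by (intro divide_right_mono) auto
    also have "\<dots> = exp (real l * (A - \<theta> * t))" by (simp add: exp_diff[symmetric] algebra_simps)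
    also have "A - \<theta> * t = - (t\<^sup>2 / (2 * (v + t / 3)))" unfolding A_def \<theta>_def by (rule bern_alg[OF vp t])
    finally show ?thesis using th0 by (intro exI[of _ \<theta>]) simp
  qed
qed

lemma hoeffding_tail:
  fixes p :: "'a pmf" and g :: "'a \<Rightarrow> real"
  assumes fin: "finite (set_pmf p)" and bnd: "\<And>x. x \<in> set_pmf p \<Longrightarrow> lo \<le> g x \<and> g x \<le> hi"
    and lh: "lo < hi" and s: "s > 0"
  shows "\<exists>\<theta>\<ge>0. (measure_pmf.expectation p (\<lambda>x. exp (\<theta> * (g x - measure_pmf.expectation p g)))) ^ l
              / exp (\<theta> * (real l * s)) \<le> exp (- (2 * real l * s\<^sup>2 / (hi - lo)\<^sup>2))"
proof -
  define c where "c = hi - lo"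
  have c: "c > 0" using lh unfolding c_def by simp
  define \<theta> where "\<theta> = 4 * s / c\<^sup>2"
  have th: "\<theta> \<ge> 0" unfolding \<theta>_def using s c by simp
  have M0: "measure_pmf.expectation p (\<lambda>x. exp (\<theta> * (g x - measure_pmf.expectation p g))) \<ge> 0"
    by (rule Bochner_Integration.integral_nonneg_AE) simp
  have "(measure_pmf.expectation p (\<lambda>x. exp (\<theta> * (g x - measure_pmf.expectation p g)))) ^ l
        \<le> (exp (\<theta>\<^sup>2 * c\<^sup>2 / 8)) ^ l"
    using M0 hoeffding_mgf[OF fin bnd th] unfolding c_def by (intro power_mono) auto
  also have "\<dots> = exp (real l * (\<theta>\<^sup>2 * c\<^sup>2 / 8))" by (rule exp_of_nat_mult[symmetric])
  finally have "(measure_pmf.expectation p (\<lambda>x. exp (\<theta> * (g x - measure_pmf.expectation p g)))) ^ l / exp (\<theta> * (real l * s))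
      \<le> exp (real l * (\<theta>\<^sup>2 * c\<^sup>2 / 8)) / exp (\<theta> * (real l * s))"
    by (intro divide_right_mono) auto
  also have "\<dots> = exp (real l * (\<theta>\<^sup>2 * c\<^sup>2 / 8) - \<theta> * (real l * s))" by (simp add: exp_diff)
  also have "real l * (\<theta>\<^sup>2 * c\<^sup>2 / 8) - \<theta> * (real l * s) = - (2 * real l * s\<^sup>2 / c\<^sup>2)"
    unfolding \<theta>_def using c by (simp add: field_simps power2_eq_square)
  finally show ?thesis using th unfolding c_def by (intro exI[of _ \<theta>]) simp
qed

lemma exp_tail_le:
  fixes K \<delta> :: real
  assumes "K \<ge> ln (2 / \<delta>)" "\<delta> > 0"
  shows "exp (- K) \<le> \<delta> / 2"
proof -
  have "exp (- K) \<le> exp (- ln (2 / \<delta>))" using assms(1) by simp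
  also have "\<dots> = \<delta> / 2" using assms(2) by (simp add: exp_minus)
  finally show ?thesis .
qed

lemma nat_ceil_ge: "real (nat \<lceil>x\<rceil>) \<ge> x"
  by linarith

lemma nat_ceil_pos: "x > 0 \<Longrightarrow> nat \<lceil>x\<rceil> > 0"
  by simp

lemma set_pmf_U: "set_pmf (pmf_of_set (conv_forests (E :: ('n::finite \<times> 'n) set))) = conv_forests E"
proof -
  have "conv_forests E \<noteq> {}" using card_forests_pos[of E] unfolding conv_forests_eq by fastforce
  moreover have "finite (conv_forests E)" by (rule finite_forests)
  ultimately show ?thesis by simp
qed

lemma finite_U: "finite (set_pmf (pmf_of_set (conv_forests (E :: ('n::finite \<times> 'n) set))))"
  unfolding set_pmf_U by (rule finite_forests)

lemma expect_omega:
  fixes E :: "('n::finite \<times> 'n) set"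
  shows "measure_pmf.expectation (pmf_of_set (conv_forests E)) (\<lambda>F. omega_hat F i k) = forest_matrix E $ i $ k"
proof -
  have ne: "conv_forests E \<noteq> {}" using card_forests_pos[of E] unfolding conv_forests_eq by fastforce
  have "measure_pmf.expectation (pmf_of_set (conv_forests E)) (\<lambda>F. omega_hat F i k)
      = (\<Sum>F\<in>conv_forests E. omega_hat F i k) / real (card (conv_forests E))"
    by (rule integral_pmf_of_set[OF ne finite_forests])
  also have "(\<Sum>F\<in>conv_forests E. omega_hat F i k) = (\<Sum>F\<in>{F. goodF E F}. ind (rt F i = k))"
    unfolding conv_forests_eq
    by (rule sum.cong) (auto simp: omega_hat_def ind_def root_of_rt)
  finally show ?thesis unfolding forest_matrix_PM PM_def conv_forests_eq by simp
qed

lemma sum_delta_root: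
  fixes S :: "'n set"
  assumes "finite S"
  shows "(\<Sum>k\<in>S. omega_hat F i k) = (if root_of F i \<in> S then 1 else 0)"
  unfolding omega_hat_def using assms by (simp add: sum.delta)

lemma part1:
  fixes E :: "('n::finite \<times> 'n) set" and \<epsilon> \<delta> :: real
  assumes simple: "\<forall>i. (i, i) \<notin> E"
    and eps: "0 < \<epsilon>" "\<epsilon> < 1" and del: "0 < \<delta>" "\<delta> < 1"
    and ij: "i \<noteq> j"
    and ldef: "l = nat \<lceil>(1 / (2 + real (outdeg E j))^2) * (1 / (2 * \<epsilon>^2) + 2 / (3 * \<epsilon>)) * ln (2 / \<delta>)\<rceil>"
  shows "measure_pmf.prob (forest_samples E l)
          {phis. forest_matrix E $ i $ j - \<epsilon> \<le> omega_bar E l phis i j \<and>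
                 omega_bar E l phis i j \<le> forest_matrix E $ i $ j + \<epsilon>} \<ge> 1 - \<delta>"
proof -
  define U where "U = pmf_of_set (conv_forests E)"
  define c where "c = 1 / (2 + real (outdeg E j))"
  have c: "c > 0" unfolding c_def by simp
  define g where "g F = c * (omega_hat F i j + (\<Sum>k\<in>in_nbrs E j. omega_hat F i k))" for F
  have finU: "finite (set_pmf U)" unfolding U_def by (rule finite_U)
  have intU: "integrable (measure_pmf U) f" for f :: "_ \<Rightarrow> real" by (rule integrable_measure_pmf_finite[OF finU])
  have jn: "j \<notin> in_nbrs E j" using simple unfolding in_nbrs_def by simp
  have finn: "finite (in_nbrs E j)" by simp
  have gi: "g F = c * (if root_of F i \<in> insert j (in_nbrs E j) then 1 else 0)" for F
  proof -
    have "omega_hat F i j + (\<Sum>k\<in>in_nbrs E j. omega_hat F i k) = (\<Sum>k\<in>insert j (in_nbrs E j). omega_hat F i k)"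
      using jn finn by simp
    also have "\<dots> = (if root_of F i \<in> insert j (in_nbrs E j) then 1 else 0)"
      using finn by (intro sum_delta_root) simp
    finally show ?thesis unfolding g_def by simp
  qed
  have bnd: "0 \<le> g F \<and> g F \<le> c" for F using c unfolding gi by simp
  define \<mu> where "\<mu> = measure_pmf.expectation U g"
  have mu: "\<mu> = forest_matrix E $ i $ j"
  proof -
    have "\<mu> = c * (forest_matrix E $ i $ j + (\<Sum>k\<in>in_nbrs E j. forest_matrix E $ i $ k))"
      unfolding \<mu>_def g_def U_def
      by (simp add: intU[unfolded U_def] Bochner_Integration.integral_sum expect_omega)
    also have "(\<Sum>k\<in>in_nbrs E j. forest_matrix E $ i $ k) = (1 + real (outdeg E j)) * forest_matrix E $ i $ j"
      using left_identity[where E=E and a=i and b=j] ij unfolding in_nbrs_def by (simp add: ind_def)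
    finally have "\<mu> = c * ((2 + real (outdeg E j)) * forest_matrix E $ i $ j)" by (simp add: algebra_simps)
    also have "\<dots> = forest_matrix E $ i $ j" unfolding c_def by simp
    finally show ?thesis .
  qed
  define L where "L = (1 / (2 + real (outdeg E j))^2) * (1 / (2 * \<epsilon>^2) + 2 / (3 * \<epsilon>)) * ln (2 / \<delta>)"
  have lnpos: "ln (2 / \<delta>) > 0" using del by simp
  have "1 / (2 * \<epsilon>^2) > 0" "2 / (3 * \<epsilon>) > 0" using eps by auto
  then have sp: "1 / (2 * \<epsilon>^2) + 2 / (3 * \<epsilon>) > 0" by linarith
  have Lpos: "L > 0" unfolding L_def using sp lnpos by (intro mult_pos_pos) auto
  have lpos: "l > 0" unfolding ldef L_def[symmetric] using Lpos by simp
  have lL: "real l \<ge> L" unfolding ldef L_def[symmetric] by (rule nat_ceil_ge)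
  have c2: "c\<^sup>2 = 1 / (2 + real (outdeg E j))^2" unfolding c_def by (simp add: power_one_over)
  have key: "2 * real l * \<epsilon>\<^sup>2 / c\<^sup>2 \<ge> ln (2 / \<delta>)"
  proof -
    have "L \<ge> c\<^sup>2 * (1 / (2 * \<epsilon>^2)) * ln (2 / \<delta>)"
      unfolding L_def c2[symmetric] using eps lnpos c
      by (intro mult_right_mono mult_left_mono) auto
    then have "real l \<ge> c\<^sup>2 * (1 / (2 * \<epsilon>^2)) * ln (2 / \<delta>)" using lL by linarith
    then show ?thesis using c eps by (simp add: field_simps)
  qed
  have tail: "exp (- (2 * real l * \<epsilon>\<^sup>2 / (c - 0)\<^sup>2)) \<le> \<delta> / 2"
    using exp_tail_le[OF key del(1)] by simp
  obtain \<theta>1 where th1: "\<theta>1 \<ge> 0"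
    "(measure_pmf.expectation U (\<lambda>x. exp (\<theta>1 * (g x - \<mu>)))) ^ l / exp (\<theta>1 * (real l * \<epsilon>)) \<le> exp (- (2 * real l * \<epsilon>\<^sup>2 / (c - 0)\<^sup>2))"
    using hoeffding_tail[OF finU, of 0 g c \<epsilon> l] bnd c eps unfolding \<mu>_def by auto
  have Em: "measure_pmf.expectation U (\<lambda>x. - g x) = - \<mu>" unfolding \<mu>_def by simp
  obtain \<theta>2 where th2: "\<theta>2 \<ge> 0"
    "(measure_pmf.expectation U (\<lambda>x. exp (\<theta>2 * (- g x - measure_pmf.expectation U (\<lambda>x. - g x))))) ^ l / exp (\<theta>2 * (real l * \<epsilon>)) \<le> exp (- (2 * real l * \<epsilon>\<^sup>2 / (0 - (- c))\<^sup>2))"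
    using hoeffding_tail[OF finU, of "- c" "\<lambda>x. - g x" 0 \<epsilon> l] bnd c eps by auto
  have th2': "(measure_pmf.expectation U (\<lambda>x. exp (\<theta>2 * (\<mu> - g x)))) ^ l / exp (\<theta>2 * (real l * \<epsilon>)) \<le> \<delta> / 2"
    using th2(2) tail unfolding Em by (simp add: algebra_simps)
  have th1': "(measure_pmf.expectation U (\<lambda>x. exp (\<theta>1 * (g x - \<mu>)))) ^ l / exp (\<theta>1 * (real l * \<epsilon>)) \<le> \<delta> / 2"
    using th1(2) tail by linarith
  have main: "1 - \<delta> \<le> measure_pmf.prob (Pi_pmf {..<l} {} (\<lambda>_. U))
           {\<phi>. \<mu> - \<epsilon> \<le> (1 / real l) * (\<Sum>t<l. g (\<phi> t)) \<and> (1 / real l) * (\<Sum>t<l. g (\<phi> t)) \<le> \<mu> + \<epsilon>}"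
    by (rule two_sided[OF finU lpos th1(1) th2(1) th1' th2'])
  have bar: "omega_bar E l phis i j = (1 / real l) * (\<Sum>t<l. g (phis t))" for phis
    unfolding omega_bar_def g_def c_def using ij by simp
  show ?thesis using main unfolding forest_samples_def U_def[symmetric] bar mu .
qed

lemma part2_numeric:
  fixes \<epsilon> q :: real
  assumes e: "\<epsilon> > 0" and q: "0 \<le> q" "q \<le> 1"
  shows "((\<epsilon> * (1 + q))\<^sup>2 / (2 * (q - q\<^sup>2 + \<epsilon> * (1 + q) / 3))) * (2 / (3 * \<epsilon>) + 1 / (4 * \<epsilon>\<^sup>2)) \<ge> 1"
proof -
  define D where "D = 2 * (q - q\<^sup>2 + \<epsilon> * (1 + q) / 3)"
  have qq: "q - q\<^sup>2 \<ge> 0" using q by (simp add: power2_eq_square mult_left_le)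
  have D: "D > 0" unfolding D_def using qq e q by (simp add: add_nonneg_pos)
  have N: "(\<epsilon> * (1 + q))\<^sup>2 * (2 / (3 * \<epsilon>) + 1 / (4 * \<epsilon>\<^sup>2)) = (1 + q)\<^sup>2 * (2 * \<epsilon> / 3 + 1 / 4)"
    using e by (simp add: field_simps power2_eq_square)
  have "(1 + q)\<^sup>2 * (2 * \<epsilon> / 3 + 1 / 4) - D = (3 * q - 1)\<^sup>2 / 4 + 2 * \<epsilon> * q * (1 + q) / 3"
    unfolding D_def by (simp add: field_simps power2_eq_square)
  also have "\<dots> \<ge> 0" using e q by (intro add_nonneg_nonneg) auto
  finally have "(\<epsilon> * (1 + q))\<^sup>2 * (2 / (3 * \<epsilon>) + 1 / (4 * \<epsilon>\<^sup>2)) \<ge> D" unfolding N by simp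
  then have "(\<epsilon> * (1 + q))\<^sup>2 * (2 / (3 * \<epsilon>) + 1 / (4 * \<epsilon>\<^sup>2)) / D \<ge> 1" using D by simp
  then show ?thesis unfolding D_def[symmetric] by (simp add: field_simps)
qed

lemma part2:
  fixes E :: "('n::finite \<times> 'n) set" and \<epsilon> \<delta> :: real
  assumes simple: "\<forall>i. (i, i) \<notin> E"
    and eps: "0 < \<epsilon>" "\<epsilon> < 1" and del: "0 < \<delta>" "\<delta> < 1"
    and ldef: "l = nat \<lceil>(2 / (3 * \<epsilon>) + 1 / (4 * \<epsilon>^2)) * ln (2 / \<delta>)\<rceil>"
  shows "measure_pmf.prob (forest_samples E l)
          {phis. (1 - \<epsilon>) * forest_matrix E $ i $ i \<le> omega_bar E l phis i i \<and>
                 omega_bar E l phis i i \<le> (1 + \<epsilon>) * forest_matrix E $ i $ i} \<ge> 1 - \<delta>"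
proof -
  define U where "U = pmf_of_set (conv_forests E)"
  define c where "c = 1 / (1 + real (outdeg E i))"
  have c: "c > 0" unfolding c_def by simp
  define B where "B F = (\<Sum>k\<in>in_nbrs E i. omega_hat F i k)" for F
  define g where "g F = c * (1 + B F)" for F
  have finU: "finite (set_pmf U)" unfolding U_def by (rule finite_U)
  have intU: "integrable (measure_pmf U) f" for f :: "_ \<Rightarrow> real" by (rule integrable_measure_pmf_finite[OF finU])
  have finn: "finite (in_nbrs E i)" by simp
  have Bi: "B F = (if root_of F i \<in> in_nbrs E i then 1 else 0)" for F
    unfolding B_def by (rule sum_delta_root[OF finn])
  have B01: "B F = 0 \<or> B F = 1" for F unfolding Bi by simp
  have B0: "0 \<le> B F" and B1: "B F \<le> 1" for F unfolding Bi by simp_all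
  define q where "q = measure_pmf.expectation U B"
  have qfm: "q = (\<Sum>k\<in>in_nbrs E i. forest_matrix E $ i $ k)"
    unfolding q_def B_def U_def
    by (simp add: intU[unfolded U_def] Bochner_Integration.integral_sum expect_omega)
  have q1: "q = (1 + real (outdeg E i)) * forest_matrix E $ i $ i - 1"
    unfolding qfm using left_identity[where E=E and a=i and b=i] unfolding in_nbrs_def by (simp add: ind_def)
  have q0: "q \<ge> 0" unfolding q_def
    by (rule Bochner_Integration.integral_nonneg_AE) (use B0 in \<open>auto intro!: AE_I2\<close>)
  have qle: "q \<le> 1"
  proof -
    have "q \<le> measure_pmf.expectation U (\<lambda>_. 1 :: real)"
      unfolding q_def by (rule integral_mono[OF intU intU]) (use B1 in auto)
    then show ?thesis by simp
  qed
  define \<mu> where "\<mu> = c * (1 + q)"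
  have mu: "\<mu> = forest_matrix E $ i $ i" unfolding \<mu>_def q1 c_def by (simp add: field_simps)
  define Y where "Y F = B F - q" for F
  have gY: "g F - \<mu> = c * Y F" for F unfolding g_def \<mu>_def Y_def by (simp add: algebra_simps)
  have Yb: "\<bar>Y F\<bar> \<le> 1" for F using B01[of F] q0 qle unfolding Y_def by auto
  have Yb': "\<bar>- Y F\<bar> \<le> 1" for F using Yb[of F] by simp
  have EY: "measure_pmf.expectation U Y = 0" unfolding Y_def q_def by (simp add: intU)
  have EY': "measure_pmf.expectation U (\<lambda>x. - Y x) = 0" using EY by simp
  define v where "v = q - q\<^sup>2"
  have v0: "v \<ge> 0" unfolding v_def using q0 qle by (simp add: power2_eq_square mult_left_le)
  have Ysq: "(Y F)\<^sup>2 = B F - 2 * q * B F + q\<^sup>2" for F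
    using B01[of F] unfolding Y_def by (auto simp: power2_eq_square algebra_simps)
  have EY2: "measure_pmf.expectation U (\<lambda>x. (Y x)\<^sup>2) = v"
    unfolding Ysq v_def by (simp add: intU q_def[symmetric] power2_eq_square algebra_simps)
  have EY2': "measure_pmf.expectation U (\<lambda>x. (- Y x)\<^sup>2) \<le> v" using EY2 by simp
  define t where "t = \<epsilon> * (1 + q)"
  have t: "t > 0" unfolding t_def using eps q0 by simp
  define L where "L = (2 / (3 * \<epsilon>) + 1 / (4 * \<epsilon>^2)) * ln (2 / \<delta>)"
  have lnpos: "ln (2 / \<delta>) > 0" using del by simp
  have "2 / (3 * \<epsilon>) > 0" "1 / (4 * \<epsilon>^2) > 0" using eps by auto
  then have sp: "2 / (3 * \<epsilon>) + 1 / (4 * \<epsilon>^2) > 0" by linarith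
  have Lpos: "L > 0" unfolding L_def using sp lnpos by (intro mult_pos_pos) auto
  have lpos: "l > 0" unfolding ldef L_def[symmetric] using Lpos by simp
  have lL: "real l \<ge> L" unfolding ldef L_def[symmetric] by (rule nat_ceil_ge)
  define X where "X = t\<^sup>2 / (2 * (v + t / 3))"
  have X0: "X \<ge> 0" unfolding X_def using v0 t by simp
  have XR: "X * (2 / (3 * \<epsilon>) + 1 / (4 * \<epsilon>\<^sup>2)) \<ge> 1"
    using part2_numeric[OF eps(1) q0 qle] unfolding X_def t_def v_def by (simp add: algebra_simps)
  have key: "real l * X \<ge> ln (2 / \<delta>)"
  proof -
    have "real l * X \<ge> L * X" using lL X0 by (rule mult_right_mono)
    also have "L * X = ln (2 / \<delta>) * (X * (2 / (3 * \<epsilon>) + 1 / (4 * \<epsilon>\<^sup>2)))" unfolding L_def by (simp add: algebra_simps)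
    also have "\<dots> \<ge> ln (2 / \<delta>) * 1" using XR lnpos by (intro mult_left_mono) auto
    finally show ?thesis by simp
  qed
  have tail: "exp (- (real l * X)) \<le> \<delta> / 2" by (rule exp_tail_le[OF key del(1)])
  obtain \<theta>a where tha: "\<theta>a \<ge> 0"
    "(measure_pmf.expectation U (\<lambda>x. exp (\<theta>a * Y x))) ^ l / exp (\<theta>a * (real l * t)) \<le> exp (- (real l * X))"
    using bernstein_tail[OF finU Yb EY, of v t l] EY2 v0 t unfolding X_def by auto
  obtain \<theta>b where thb: "\<theta>b \<ge> 0"
    "(measure_pmf.expectation U (\<lambda>x. exp (\<theta>b * (- Y x)))) ^ l / exp (\<theta>b * (real l * t)) \<le> exp (- (real l * X))"
    using bernstein_tail[OF finU Yb' EY' EY2' v0 t, of l] unfolding X_def by auto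
  define s where "s = \<epsilon> * \<mu>"
  have st: "s = c * t" unfolding s_def t_def \<mu>_def by simp
  have h1: "(measure_pmf.expectation U (\<lambda>x. exp ((\<theta>a / c) * (g x - \<mu>)))) ^ l / exp ((\<theta>a / c) * (real l * s)) \<le> \<delta> / 2"
  proof -
    have "(\<lambda>x. exp ((\<theta>a / c) * (g x - \<mu>))) = (\<lambda>x. exp (\<theta>a * Y x))" using c by (simp add: gY)
    moreover have "(\<theta>a / c) * (real l * s) = \<theta>a * (real l * t)" using c unfolding st by simp
    ultimately have "(measure_pmf.expectation U (\<lambda>x. exp ((\<theta>a / c) * (g x - \<mu>)))) ^ l / exp ((\<theta>a / c) * (real l * s))
        = (measure_pmf.expectation U (\<lambda>x. exp (\<theta>a * Y x))) ^ l / exp (\<theta>a * (real l * t))" by (simp only:)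
    then show ?thesis using tha(2) tail by linarith
  qed
  have h2: "(measure_pmf.expectation U (\<lambda>x. exp ((\<theta>b / c) * (\<mu> - g x)))) ^ l / exp ((\<theta>b / c) * (real l * s)) \<le> \<delta> / 2"
  proof -
    have "\<mu> - g x = c * (- Y x)" for x using gY[of x] by simp
    then have "(\<lambda>x. exp ((\<theta>b / c) * (\<mu> - g x))) = (\<lambda>x. exp (\<theta>b * (- Y x)))" using c by simp
    moreover have "(\<theta>b / c) * (real l * s) = \<theta>b * (real l * t)" using c unfolding st by simp
    ultimately have "(measure_pmf.expectation U (\<lambda>x. exp ((\<theta>b / c) * (\<mu> - g x)))) ^ l / exp ((\<theta>b / c) * (real l * s))
        = (measure_pmf.expectation U (\<lambda>x. exp (\<theta>b * (- Y x)))) ^ l / exp (\<theta>b * (real l * t))" by (simp only:)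
    then show ?thesis using thb(2) tail by linarith
  qed
  have main: "1 - \<delta> \<le> measure_pmf.prob (Pi_pmf {..<l} {} (\<lambda>_. U))
           {\<phi>. \<mu> - s \<le> (1 / real l) * (\<Sum>t<l. g (\<phi> t)) \<and> (1 / real l) * (\<Sum>t<l. g (\<phi> t)) \<le> \<mu> + s}"
    by (rule two_sided[OF finU lpos _ _ h1 h2]) (use tha(1) thb(1) c in auto)
  have bar: "omega_bar E l phis i i = (1 / real l) * (\<Sum>t<l. g (phis t))" for phis
    unfolding omega_bar_def g_def c_def B_def by simp
  have set_eq: "{phis. (1 - \<epsilon>) * forest_matrix E $ i $ i \<le> omega_bar E l phis i i \<and>
                 omega_bar E l phis i i \<le> (1 + \<epsilon>) * forest_matrix E $ i $ i}
     = {\<phi>. \<mu> - s \<le> (1 / real l) * (\<Sum>t<l. g (\<phi> t)) \<and> (1 / real l) * (\<Sum>t<l. g (\<phi> t)) \<le> \<mu> + s}"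
    unfolding bar mu[symmetric] s_def by (simp add: algebra_simps)
  show ?thesis using main unfolding forest_samples_def U_def[symmetric] set_eq .
qed

theorem theorem4p5:
  fixes E :: "('n::finite \<times> 'n) set" and \<epsilon> \<delta> :: real
  assumes simple: "\<forall>i. (i, i) \<notin> E"
    and eps: "0 < \<epsilon>" "\<epsilon> < 1" and del: "0 < \<delta>" "\<delta> < 1"
  shows
    "(\<forall>i j l. i \<noteq> j \<longrightarrow>
        l = nat \<lceil>(1 / (2 + real (outdeg E j))^2) * (1 / (2 * \<epsilon>^2) + 2 / (3 * \<epsilon>)) * ln (2 / \<delta>)\<rceil> \<longrightarrow>
        measure_pmf.prob (forest_samples E l)
          {phis. forest_matrix E $ i $ j - \<epsilon> \<le> omega_bar E l phis i j \<and>
                 omega_bar E l phis i j \<le> forest_matrix E $ i $ j + \<epsilon>} \<ge> 1 - \<delta>)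
   \<and>
     (\<forall>i l.
        l = nat \<lceil>(2 / (3 * \<epsilon>) + 1 / (4 * \<epsilon>^2)) * ln (2 / \<delta>)\<rceil> \<longrightarrow>
        measure_pmf.prob (forest_samples E l)
          {phis. (1 - \<epsilon>) * forest_matrix E $ i $ i \<le> omega_bar E l phis i i \<and>
                 omega_bar E l phis i i \<le> (1 + \<epsilon>) * forest_matrix E $ i $ i} \<ge> 1 - \<delta>)"
  using part1[OF simple eps del] part2[OF simple eps del] by blast

end
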